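(* Let $(X,d,f)$ be a dynamical system and $\mathcal{A}=\{\mathcal{U}_n\}_{n\in\mathbb{N}}$ a complete defining sequence of $(X,d)$. (i) $(X,d,f)$ is topologically conjugate to the inverse limit of $(\hookrightarrow,(\mathcal{O}(\mathcal{U}_n),\sigma_n))$ equipped with the map $\sigma^*=(\sigma_n)^*$. (ii) If in addition $\mathcal{A}$ is tame and $f$ is uniformly continuous, then the conjugacy can be made uniform (the conjugating homeomorphism and its inverse are uniformly continuous).
   Context: Spaces are nonempty separable metrizable; a dynamical system $(X,d,f)$ has admissible metric $d$ and continuous $f$. A partition is a cover by pairwise disjoint nonempty clopen sets. A defining sequence is a sequence $\{\mathcal{U}_n\}$ of partitions, each refining the previous, whose union is a basis; complete if nested sequences $U_n\in\mathcal{U}_n$ have nonempty intersection; tame if $\sup\{\operatorname{diam}O:O\in\mathcal{U}_n\}\to0$ and each $\mathcal{U}_n$ is $\rho_n$-separated for some $\rho_n>0$. For a partition $\mathcal{U}$ (discrete metric), $\mathcal{O}(\mathcal{U})=\{(O_i)_{i\in\mathbb{N}}\in\mathcal{U}^{\mathbb{N}}: \forall k\ \exists x\in X \text{ with } f^i(x)\in O_i \text{ for } 0\le i\le k\}$, a shift space over the alphabet $\mathcal{U}$ with shift map $\sigma_n$ and metric $1/(i+1)$ ($i$ least index of disagreement). The bonding map $\hookrightarrow:\mathcal{O}(\mathcal{U}_{n+1})\to\mathcal{O}(\mathcal{U}_n)$ sends $(O_i)$ to the unique $(V_i)\in\mathcal{U}_n^{\mathbb{N}}$ with $O_i\subseteq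 V_i$. The inverse limit is $\{(y_n)\in\prod_n\mathcal{O}(\mathcal{U}_n): y_n=\hookrightarrow(y_{n+1})\}$ with metric $d_\Pi((y_n),(z_n))=\max_n d(y_n,z_n)/(n+1)$, and $\sigma^*$ is the restriction of $\prod_n\sigma_n$. *)

theory Defs
  imports "HOL-Analysis.Analysis"
begin

definition is_partition :: "'a set \<Rightarrow> ('a \<Rightarrow> 'a \<Rightarrow> real) \<Rightarrow> 'a set set \<Rightarrow> bool" where
  "is_partition X d P \<longleftrightarrow>
     \<Union>P = X \<and>
     (\<forall>A\<in>P. A \<noteq> {} \<and> openin (Metric_space.mtopology X d) A
                     \<and> closedin (Metric_space.mtopology X d) A) \<and>
     (\<forall>A\<in>P. \<forall>B\<in>P. A \<noteq> B \<longrightarrow> A \<inter> B = {})"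

definition defining_sequence :: "'a set \<Rightarrow> ('a \<Rightarrow> 'a \<Rightarrow> real) \<Rightarrow> (nat \<Rightarrow> 'a set set) \<Rightarrow> bool" where
  "defining_sequence X d U \<longleftrightarrow>
     (\<forall>n. is_partition X d (U n)) \<and>
     (\<forall>n. \<forall>A\<in>U (Suc n). \<exists>B\<in>U n. A \<subseteq> B) \<and>
     (\<forall>S x. openin (Metric_space.mtopology X d) S \<and> x \<in> S \<longrightarrow>
            (\<exists>B\<in>(\<Union>n. U n). x \<in> B \<and> B \<subseteq> S))"

definition complete_defseq :: "'a set \<Rightarrow> ('a \<Rightarrow> 'a \<Rightarrow> real) \<Rightarrow> (nat \<Rightarrow> 'a set set) \<Rightarrow> bool" where
  "complete_defseq X d U \<longleftrightarrow>
     defining_sequence X d U \<and>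
     (\<forall>V. (\<forall>n. V n \<in> U n) \<and> (\<forall>n. V (Suc n) \<subseteq> V n) \<longrightarrow> (\<Inter>n. V n) \<noteq> {})"

text \<open>Diameter of a set, as an extended real (so that unbounded sets have diameter \<infinity>).\<close>
definition set_diam :: "('a \<Rightarrow> 'a \<Rightarrow> real) \<Rightarrow> 'a set \<Rightarrow> ereal" where
  "set_diam d A = (SUP p\<in>A \<times> A. ereal (d (fst p) (snd p)))"

definition tame_defseq :: "'a set \<Rightarrow> ('a \<Rightarrow> 'a \<Rightarrow> real) \<Rightarrow> (nat \<Rightarrow> 'a set set) \<Rightarrow> bool" where
  "tame_defseq X d U \<longleftrightarrow>
     defining_sequence X d U \<and>
     ((\<lambda>n. SUP A\<in>U n. set_diam d A) \<longlonglongrightarrow> 0) \<and>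
     (\<forall>n. \<exists>\<rho>>0. \<forall>A\<in>U n. \<forall>B\<in>U n. A \<noteq> B \<longrightarrow> (\<forall>x\<in>A. \<forall>y\<in>B. \<rho> \<le> d x y))"

definition orbit_space :: "'a set \<Rightarrow> ('a \<Rightarrow> 'a) \<Rightarrow> 'a set set \<Rightarrow> (nat \<Rightarrow> 'a set) set" where
  "orbit_space X f P =
     {s. (\<forall>i. s i \<in> P) \<and> (\<forall>k. \<exists>x\<in>X. \<forall>i\<le>k. (f ^^ i) x \<in> s i)}"

definition shift :: "(nat \<Rightarrow> 'b) \<Rightarrow> (nat \<Rightarrow> 'b)" where
  "shift s = (\<lambda>i. s (Suc i))"

definition seq_dist :: "(nat \<Rightarrow> 'b) \<Rightarrow> (nat \<Rightarrow> 'b) \<Rightarrow> real" where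
  "seq_dist s t = (if s = t then 0 else 1 / real (Suc (LEAST i. s i \<noteq> t i)))"

definition bond :: "'a set set \<Rightarrow> (nat \<Rightarrow> 'a set) \<Rightarrow> (nat \<Rightarrow> 'a set)" where
  "bond P s = (\<lambda>i. THE V. V \<in> P \<and> s i \<subseteq> V)"

definition inv_limit :: "'a set \<Rightarrow> ('a \<Rightarrow> 'a) \<Rightarrow> (nat \<Rightarrow> 'a set set) \<Rightarrow> (nat \<Rightarrow> nat \<Rightarrow> 'a set) set" where
  "inv_limit X f U =
     {y. (\<forall>n. y n \<in> orbit_space X f (U n)) \<and> (\<forall>n. y n = bond (U n) (y (Suc n)))}"

definition inv_limit_dist :: "(nat \<Rightarrow> nat \<Rightarrow> 'a set) \<Rightarrow> (nat \<Rightarrow> nat \<Rightarrow> 'a set) \<Rightarrow> real" where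
  "inv_limit_dist y z = (SUP n. seq_dist (y n) (z n) / real (Suc n))"

definition sigma_star :: "(nat \<Rightarrow> nat \<Rightarrow> 'a set) \<Rightarrow> (nat \<Rightarrow> nat \<Rightarrow> 'a set)" where
  "sigma_star y = (\<lambda>n. shift (y n))"

end

theory Submission imports Defs begin

lemma seq_dist_nonneg: "0 \<le> seq_dist s t"
  by (simp add: seq_dist_def)

lemma seq_dist_le1: "seq_dist s t \<le> 1"
  by (simp add: seq_dist_def divide_le_eq)

lemma seq_dist_commute: "seq_dist s t = seq_dist t s"
  unfolding seq_dist_def by (simp add: eq_commute)

lemma seq_dist_zero: "seq_dist s t = 0 \<longleftrightarrow> s = t"
  by (simp add: seq_dist_def)

lemma seq_dist_agree:
  assumes "\<forall>i\<le>N. s i = t i"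
  shows "seq_dist s t \<le> 1 / real (N + 2)"
proof (cases "s = t")
  case False
  then obtain j where "s j \<noteq> t j" by auto
  then have "s (LEAST i. s i \<noteq> t i) \<noteq> t (LEAST i. s i \<noteq> t i)" by (rule LeastI)
  then have "N < (LEAST i. s i \<noteq> t i)" using assms by (meson not_le)
  then show ?thesis using False by (simp add: seq_dist_def frac_le)
qed (simp add: seq_dist_def)

lemma seq_dist_first: "s 0 \<noteq> t 0 \<Longrightarrow> seq_dist s t = 1"
  unfolding seq_dist_def
  by (metis (mono_tags, lifting) Least_eq_0 div_by_1 of_nat_1 One_nat_def)

lemma seq_dist_ultra: "seq_dist s u \<le> max (seq_dist s t) (seq_dist t u)"
proof (cases "s = u")
  case True then show ?thesis using seq_dist_nonneg[of s t] by (simp add: seq_dist_def)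
next
  case su: False
  show ?thesis
  proof (cases "s = t \<or> t = u")
    case True then show ?thesis by auto
  next
    case False
    define a where "a = (LEAST i. s i \<noteq> t i)"
    define b where "b = (LEAST i. t i \<noteq> u i)"
    define c where "c = (LEAST i. s i \<noteq> u i)"
    obtain j where "s j \<noteq> u j" using su by auto
    then have cc: "s c \<noteq> u c" unfolding c_def by (rule LeastI)
    have "min a b \<le> c"
    proof (rule ccontr)
      assume "\<not> ?thesis"
      then have "c < a" "c < b" by auto
      then have "s c = t c" "t c = u c" unfolding a_def b_def using not_less_Least by blast+
      with cc show False by simp
    qed
    then have "1 / real (Suc c) \<le> 1 / real (Suc (min a b))" by (simp add: frac_le)
    then show ?thesis using False su unfolding seq_dist_def a_def b_def c_def[symmetric]
      by (auto simp: min_def max_def split: if_splits)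
  qed
qed

lemma seq_dist_triangle: "seq_dist s u \<le> seq_dist s t + seq_dist t u"
  using seq_dist_ultra[of s u t] seq_dist_nonneg[of s t] seq_dist_nonneg[of t u] by linarith

lemma ild_bdd: "bdd_above (range (\<lambda>n. seq_dist (y n) (z n) / real (Suc n)))"
proof (rule bdd_aboveI2)
  fix n show "seq_dist (y n) (z n) / real (Suc n) \<le> 1"
    using seq_dist_le1[of "y n" "z n"] seq_dist_nonneg[of "y n" "z n"]
    by (simp add: divide_le_eq)
qed

lemma ild_term_le: "seq_dist (y n) (z n) / real (Suc n) \<le> inv_limit_dist y z"
  unfolding inv_limit_dist_def by (rule cSUP_upper[OF _ ild_bdd]) simp

lemma ild_nonneg: "0 \<le> inv_limit_dist y z"
  using ild_term_le[of y 0 z] seq_dist_nonneg[of "y 0" "z 0"] by simp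

lemma ild_commute: "inv_limit_dist y z = inv_limit_dist z y"
  unfolding inv_limit_dist_def by (simp add: seq_dist_commute)

lemma ild_zero: "inv_limit_dist y z = 0 \<longleftrightarrow> y = z"
proof
  assume h: "inv_limit_dist y z = 0"
  have "y n = z n" for n
    using ild_term_le[of y n z] seq_dist_nonneg[of "y n" "z n"] h
    by (simp add: divide_le_0_iff seq_dist_zero[symmetric])
  then show "y = z" by auto
qed (simp add: inv_limit_dist_def seq_dist_def)

lemma ild_triangle: "inv_limit_dist y w \<le> inv_limit_dist y z + inv_limit_dist z w"
  unfolding inv_limit_dist_def[of y w]
proof (rule cSUP_least)
  fix n
  have "seq_dist (y n) (w n) / real (Suc n) \<le> seq_dist (y n) (z n) / real (Suc n) + seq_dist (z n) (w n) / real (Suc n)"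
    using seq_dist_triangle[of "y n" "w n" "z n"] by (simp add: add_divide_distrib[symmetric] divide_right_mono)
  also have "\<dots> \<le> inv_limit_dist y z + inv_limit_dist z w"
    using ild_term_le[of y n z] ild_term_le[of z n w] by simp
  finally show "seq_dist (y n) (w n) / real (Suc n) \<le> inv_limit_dist y z + inv_limit_dist z w" .
qed simp

lemma ild_metric: "Metric_space S inv_limit_dist"
  by unfold_locales (auto simp: ild_nonneg ild_commute ild_zero ild_triangle)

lemma ild_small:
  assumes "\<forall>n\<le>N. \<forall>i\<le>N. y n i = z n i"
  shows "inv_limit_dist y z \<le> 1 / real (N + 2)"
  unfolding inv_limit_dist_def
proof (rule cSUP_least)
  fix n
  show "seq_dist (y n) (z n) / real (Suc n) \<le> 1 / real (N + 2)"
  proof (cases "n \<le> N")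
    case True
    then have "seq_dist (y n) (z n) \<le> 1 / real (N + 2)" using assms seq_dist_agree[of N "y n" "z n"] by auto
    moreover have "seq_dist (y n) (z n) / real (Suc n) \<le> seq_dist (y n) (z n)"
      using seq_dist_nonneg[of "y n" "z n"] by (simp add: divide_le_eq mult_le_cancel_left1)
    ultimately show ?thesis by linarith
  next
    case False
    have "seq_dist (y n) (z n) / real (Suc n) \<le> 1 / real (Suc n)"
      using seq_dist_le1[of "y n" "z n"] by (intro divide_right_mono) auto
    also have "\<dots> \<le> 1 / real (N + 2)" using False by (simp add: frac_le)
    finally show ?thesis .
  qed
qed simp

lemma ild_large:
  assumes "inv_limit_dist y z < 1 / real (Suc m)"
  shows "y m 0 = z m 0"
proof (rule ccontr)
  assume "y m 0 \<noteq> z m 0"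
  then have "seq_dist (y m) (z m) = 1" by (rule seq_dist_first)
  then show False using ild_term_le[of y m z] assms by simp
qed


definition cell :: "'a set set \<Rightarrow> 'a \<Rightarrow> 'a set" where
  "cell P x = (THE V. V \<in> P \<and> x \<in> V)"

locale cds = Metric_space X d for X :: "'a set" and d +
  fixes f :: "'a \<Rightarrow> 'a" and U :: "nat \<Rightarrow> 'a set set"
  assumes contf: "continuous_map mtopology mtopology f"
    and cdsU: "complete_defseq X d U"
begin

lemma part: "is_partition X d (U n)"
  using cdsU by (simp add: complete_defseq_def defining_sequence_def)

lemma refine: "A \<in> U (Suc n) \<Longrightarrow> \<exists>B\<in>U n. A \<subseteq> B"
  using cdsU by (simp add: complete_defseq_def defining_sequence_def)

lemma basis: assumes "openin mtopology S" "x \<in> S" shows "\<exists>n. \<exists>B\<in>U n. x \<in> B \<and> B \<subseteq> S"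
proof -
  have "\<forall>S x. openin mtopology S \<and> x \<in> S \<longrightarrow> (\<exists>B\<in>(\<Union>n. U n). x \<in> B \<and> B \<subseteq> S)"
    using cdsU unfolding complete_defseq_def defining_sequence_def by (elim conjE)
  then have "\<exists>B\<in>(\<Union>n. U n). x \<in> B \<and> B \<subseteq> S" using assms by (simp only: simp_thms)
  then show ?thesis by (simp only: UN_iff Bex_def) blast
qed

lemma complete: "(\<And>n. V n \<in> U n) \<Longrightarrow> (\<And>n. V (Suc n) \<subseteq> V n) \<Longrightarrow> (\<Inter>n. V n) \<noteq> {}"
  using cdsU unfolding complete_defseq_def by blast

lemma cell_sub: "A \<in> U n \<Longrightarrow> A \<subseteq> X"
  using part[of n] unfolding is_partition_def by blast

lemma cell_ne: "A \<in> U n \<Longrightarrow> A \<noteq> {}"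
  using part[of n] unfolding is_partition_def by blast

lemma cell_open: "A \<in> U n \<Longrightarrow> openin mtopology A"
  using part[of n] unfolding is_partition_def by blast

lemma cell_disj: "A \<in> U n \<Longrightarrow> B \<in> U n \<Longrightarrow> x \<in> A \<Longrightarrow> x \<in> B \<Longrightarrow> A = B"
  using part[of n] unfolding is_partition_def by blast

lemma cell_ex: "x \<in> X \<Longrightarrow> \<exists>A\<in>U n. x \<in> A"
  using part[of n] unfolding is_partition_def by blast

lemma cell_eq: "A \<in> U n \<Longrightarrow> x \<in> A \<Longrightarrow> cell (U n) x = A"
  unfolding cell_def by (rule the_equality) (simp, metis cell_disj)

lemma cell_in: "x \<in> X \<Longrightarrow> cell (U n) x \<in> U n"
  using cell_ex[of x n] cell_eq by auto

lemma cell_mem: "x \<in> X \<Longrightarrow> x \<in> cell (U n) x"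
  using cell_ex[of x n] cell_eq by auto

lemma cell_mono: assumes "x \<in> X" "n \<le> m" shows "cell (U m) x \<subseteq> cell (U n) x"
  using assms(2) proof (induction m rule: dec_induct)
  case (step m)
  obtain B where B: "B \<in> U m" "cell (U (Suc m)) x \<subseteq> B"
    using refine[OF cell_in[OF assms(1), of "Suc m"]] by auto
  then have "B = cell (U m) x" using cell_eq cell_mem[OF assms(1)] by blast
  then show ?case using B step by auto
qed simp

lemma cell_coarsen: "z \<in> X \<Longrightarrow> w \<in> X \<Longrightarrow> n \<le> N \<Longrightarrow> cell (U N) z = cell (U N) w \<Longrightarrow> cell (U n) z = cell (U n) w"
  by (metis cell_eq cell_in cell_mem cell_mono subsetD)

lemma f_in: "x \<in> X \<Longrightarrow> f x \<in> X"
  using continuous_map_image_subset_topspace[OF contf] by auto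

lemma fi_in: "x \<in> X \<Longrightarrow> (f ^^ i) x \<in> X"
  by (induction i) (auto simp: f_in)

lemma fi_cont: "continuous_map mtopology mtopology (f ^^ i)"
proof (induction i)
  case (Suc i)
  then show ?case using continuous_map_compose[OF Suc contf] by (simp add: o_def)
qed simp

definition H :: "'a \<Rightarrow> nat \<Rightarrow> nat \<Rightarrow> 'a set" where
  "H x = (\<lambda>n i. cell (U n) ((f ^^ i) x))"

definition G :: "(nat \<Rightarrow> nat \<Rightarrow> 'a set) \<Rightarrow> 'a" where
  "G y = (SOME x. x \<in> X \<and> (\<forall>n. x \<in> y n 0))"

lemma H_in: assumes x: "x \<in> X" shows "H x \<in> inv_limit X f U"
proof -
  have "H x n \<in> orbit_space X f (U n)" for n
    unfolding orbit_space_def H_def using x by (auto intro!: cell_in cell_mem fi_in)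
  moreover have "H x n = bond (U n) (H x (Suc n))" for n
  proof -
    have "cell (U n) ((f ^^ i) x) = (THE V. V \<in> U n \<and> cell (U (Suc n)) ((f ^^ i) x) \<subseteq> V)" for i
    proof (rule sym, rule the_equality)
      show "cell (U n) ((f ^^ i) x) \<in> U n \<and> cell (U (Suc n)) ((f ^^ i) x) \<subseteq> cell (U n) ((f ^^ i) x)"
        using cell_in cell_mono fi_in x by auto
    next
      fix V assume "V \<in> U n \<and> cell (U (Suc n)) ((f ^^ i) x) \<subseteq> V"
      then show "V = cell (U n) ((f ^^ i) x)"
        using cell_eq cell_mem fi_in x by (metis subsetD)
    qed
    then show ?thesis unfolding bond_def H_def by auto
  qed
  ultimately show ?thesis unfolding inv_limit_def mem_Collect_eq by blast
qed

lemma H_shift: "H (f x) = sigma_star (H x)"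
  unfolding H_def sigma_star_def shift_def by (simp add: funpow_swap1)

lemma IL_orb: "y \<in> inv_limit X f U \<Longrightarrow> y n \<in> orbit_space X f (U n)"
  unfolding inv_limit_def mem_Collect_eq by blast

lemma IL_bond: "y \<in> inv_limit X f U \<Longrightarrow> y n = bond (U n) (y (Suc n))"
  unfolding inv_limit_def mem_Collect_eq by blast

lemma IL_in: "y \<in> inv_limit X f U \<Longrightarrow> y n i \<in> U n"
  using IL_orb[of y n] unfolding orbit_space_def by blast

lemma IL_suc: assumes y: "y \<in> inv_limit X f U" shows "y (Suc n) i \<subseteq> y n i"
proof -
  obtain B where B: "B \<in> U n" "y (Suc n) i \<subseteq> B" using refine[OF IL_in[OF y]] by blast
  have "(THE V. V \<in> U n \<and> y (Suc n) i \<subseteq> V) = B"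
  proof (rule the_equality)
    fix V assume "V \<in> U n \<and> y (Suc n) i \<subseteq> V"
    moreover obtain z where "z \<in> y (Suc n) i" using cell_ne[OF IL_in[OF y]] by blast
    ultimately show "V = B" using B cell_disj by blast
  qed (use B in auto)
  moreover have "y n i = bond (U n) (y (Suc n)) i" using IL_bond[OF y] by metis
  ultimately show ?thesis using B by (simp add: bond_def)
qed

lemma IL_mono: assumes "y \<in> inv_limit X f U" "n \<le> m" shows "y m i \<subseteq> y n i"
  using assms(2) by (induction m rule: dec_induct) (use IL_suc[OF assms(1), of _ i] in auto)

lemma G_prop: assumes y: "y \<in> inv_limit X f U" shows "G y \<in> X \<and> (\<forall>n. G y \<in> y n 0)"
proof -
  have "(\<Inter>n. y n 0) \<noteq> {}" using complete[of "\<lambda>n. y n 0"] IL_in[OF y] IL_suc[OF y] by auto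
  then obtain x where "\<forall>n. x \<in> y n 0" by auto
  moreover then have "x \<in> X" using cell_sub[OF IL_in[OF y, of 0 0]] by auto
  ultimately have "x \<in> X \<and> (\<forall>n. x \<in> y n 0)" by blast
  then show ?thesis unfolding G_def by (rule someI)
qed

lemma nbhd: "x \<in> X \<Longrightarrow> openin mtopology S \<Longrightarrow> x \<in> S \<Longrightarrow> \<exists>n. cell (U n) x \<subseteq> S"
  using basis cell_eq by metis

lemma sep: assumes "x \<in> X" "z \<in> X" "x \<noteq> z" shows "\<exists>n. z \<notin> cell (U n) x"
proof -
  have "openin mtopology (mball x (d x z))" by simp
  moreover have "x \<in> mball x (d x z)" using assms by simp
  then obtain n where "cell (U n) x \<subseteq> mball x (d x z)" using nbhd assms by blast
  then show ?thesis by auto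
qed

lemma H_G: assumes y: "y \<in> inv_limit X f U" shows "H (G y) = y"
proof -
  define x0 where "x0 = G y"
  have x0: "x0 \<in> X" "\<And>n. x0 \<in> y n 0" using G_prop[OF y] x0_def by auto
  have "cell (U m) ((f ^^ i) x0) = y m i" for m i
  proof -
    define V where "V = cell (U m) ((f ^^ i) x0)"
    have V: "V \<in> U m" "(f ^^ i) x0 \<in> V" using V_def cell_in cell_mem fi_in x0 by auto
    define S where "S = {z \<in> topspace mtopology. (f ^^ i) z \<in> V}"
    have "openin mtopology S" unfolding S_def
      by (rule openin_continuous_map_preimage[OF fi_cont cell_open[OF V(1)]])
    moreover have "x0 \<in> S" using S_def V x0 by auto
    ultimately obtain n where n: "cell (U n) x0 \<subseteq> S" using nbhd x0 by blast
    have cn: "cell (U n) x0 = y n 0" using cell_eq[OF IL_in[OF y] x0(2)] .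
    define n' where "n' = max n m"
    have "y n' \<in> orbit_space X f (U n')" using IL_orb[OF y] .
    then obtain z where z: "z \<in> X" "\<forall>j\<le>i. (f ^^ j) z \<in> y n' j" unfolding orbit_space_def by blast
    have "z \<in> y n 0" using z(2) IL_mono[OF y, of n n' 0] n'_def by auto
    then have "(f ^^ i) z \<in> V" using n cn S_def by auto
    moreover have "(f ^^ i) z \<in> y m i" using z(2) IL_mono[OF y, of m n' i] n'_def by auto
    ultimately have "V = y m i" using cell_disj[OF V(1) IL_in[OF y]] by blast
    then show ?thesis using V_def by simp
  qed
  then show ?thesis unfolding H_def x0_def by auto
qed

lemma G_H: assumes x: "x \<in> X" shows "G (H x) = x"
proof (rule ccontr)
  assume ne: "G (H x) \<noteq> x"
  have "G (H x) \<in> X \<and> (\<forall>n. G (H x) \<in> H x n 0)" using G_prop[OF H_in[OF x]] .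
  then show False using sep[OF x _ ne[symmetric]] by (auto simp: H_def)
qed

end

lemma small_N: "(\<epsilon>::real) > 0 \<Longrightarrow> \<exists>N. 1 / real (N + 2) < \<epsilon>"
proof -
  assume "\<epsilon> > 0"
  then obtain n where "inverse (real (Suc n)) < \<epsilon>" using reals_Archimedean by blast
  moreover have "1 / real (n + 2) \<le> inverse (real (Suc n))" by (simp add: inverse_eq_divide frac_le)
  ultimately show ?thesis by (meson le_less_trans)
qed

context cds
begin

abbreviation "IL \<equiv> inv_limit X f U"

lemma H_close:
  assumes "a \<in> X" "x \<in> X" "\<forall>i\<le>N. cell (U N) ((f ^^ i) x) = cell (U N) ((f ^^ i) a)"
  shows "inv_limit_dist (H a) (H x) \<le> 1 / real (N + 2)"
proof (rule ild_small, intro allI impI)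
  fix n i assume "n \<le> N" "i \<le> N"
  then show "H a n i = H x n i" unfolding H_def
    using cell_coarsen[OF fi_in[OF assms(2)] fi_in[OF assms(1)] \<open>n \<le> N\<close>] assms(3) by auto
qed

lemma H_cont: "continuous_map mtopology (Metric_space.mtopology IL inv_limit_dist) H"
  unfolding metric_continuous_map[OF ild_metric]
proof (intro conjI ballI allI impI)
  show "H ` X \<subseteq> IL" using H_in by auto
next
  fix a \<epsilon> assume a: "a \<in> X" and e: "(\<epsilon>::real) > 0"
  obtain N where N: "1 / real (N + 2) < \<epsilon>" using small_N[OF e] by blast
  define S where "S = (\<Inter>i\<in>{..N}. {z \<in> topspace mtopology. (f ^^ i) z \<in> cell (U N) ((f ^^ i) a)})"
  have "openin mtopology S" unfolding S_def
  proof (rule openin_INT2)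
    fix i assume "i \<in> {..N}"
    show "openin mtopology {z \<in> topspace mtopology. (f ^^ i) z \<in> cell (U N) ((f ^^ i) a)}"
      by (rule openin_continuous_map_preimage[OF fi_cont cell_open[OF cell_in[OF fi_in[OF a]]]])
  qed auto
  moreover have "a \<in> S" unfolding S_def using a by (auto intro: cell_mem fi_in)
  ultimately obtain r where r: "r > 0" "mball a r \<subseteq> S" using openin_mtopology by blast
  show "\<exists>\<delta>>0. \<forall>x. x \<in> X \<and> d a x < \<delta> \<longrightarrow> inv_limit_dist (H a) (H x) < \<epsilon>"
  proof (intro exI conjI allI impI)
    fix x assume x: "x \<in> X \<and> d a x < r"
    then have "x \<in> S" using r a by auto
    then have "\<forall>i\<le>N. cell (U N) ((f ^^ i) x) = cell (U N) ((f ^^ i) a)"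
      unfolding S_def using cell_eq[OF cell_in[OF fi_in[OF a]]] by auto
    from H_close[OF a _ this] x have "inv_limit_dist (H a) (H x) \<le> 1 / real (N + 2)" by blast
    then show "inv_limit_dist (H a) (H x) < \<epsilon>" using N by linarith
  qed (use r in auto)
qed

lemma G_cont: "continuous_map (Metric_space.mtopology IL inv_limit_dist) mtopology G"
  unfolding Metric_space.metric_continuous_map[OF ild_metric Metric_space_axioms]
proof (intro conjI ballI allI impI)
  show "G ` IL \<subseteq> X" using G_prop by auto
next
  fix b \<epsilon> assume b: "b \<in> IL" and e: "(\<epsilon>::real) > 0"
  have Gb: "G b \<in> X" "\<And>n. G b \<in> b n 0" using G_prop[OF b] by auto
  obtain m where m: "cell (U m) (G b) \<subseteq> mball (G b) \<epsilon>" using nbhd[OF Gb(1), of "mball (G b) \<epsilon>"] Gb e by auto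
  show "\<exists>\<delta>>0. \<forall>y. y \<in> IL \<and> inv_limit_dist b y < \<delta> \<longrightarrow> d (G b) (G y) < \<epsilon>"
  proof (intro exI conjI allI impI)
    fix y assume y: "y \<in> IL \<and> inv_limit_dist b y < 1 / real (Suc m)"
    then have "b m 0 = y m 0" using ild_large by blast
    moreover have "G y \<in> y m 0" using G_prop y by blast
    moreover have "cell (U m) (G b) = b m 0" using cell_eq[OF IL_in[OF b] Gb(2)] .
    ultimately show "d (G b) (G y) < \<epsilon>" using m by auto
  qed simp
qed

lemma homeo: "homeomorphic_maps mtopology (Metric_space.mtopology IL inv_limit_dist) H G"
  unfolding homeomorphic_maps_def using H_cont G_cont G_H H_G
  by (simp add: Metric_space.topspace_mtopology[OF ild_metric])

lemma fi_uc:
  assumes uc: "uniformly_continuous_map (metric (X, d)) (metric (X, d)) f"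
  shows "\<forall>\<epsilon>>0. \<exists>\<delta>>0. \<forall>x\<in>X. \<forall>y\<in>X. d x y < \<delta> \<longrightarrow> (\<forall>i\<le>N. d ((f ^^ i) x) ((f ^^ i) y) < \<epsilon>)"
proof (induction N)
  case 0
  then show ?case by auto
next
  case (Suc N)
  show ?case
  proof (intro allI impI)
    fix \<epsilon> :: real assume e: "\<epsilon> > 0"
    obtain \<delta>1 where d1: "\<delta>1 > 0" "\<forall>x\<in>X. \<forall>y\<in>X. d y x < \<delta>1 \<longrightarrow> d (f y) (f x) < \<epsilon>"
      using uc e unfolding uniformly_continuous_map_def by auto
    have "0 < min \<epsilon> \<delta>1" using e d1 by simp
    from Suc.IH[rule_format, OF this] obtain \<delta> where d: "\<delta> > 0" "\<forall>x\<in>X. \<forall>y\<in>X. d x y < \<delta> \<longrightarrow> (\<forall>i\<le>N. d ((f ^^ i) x) ((f ^^ i) y) < min \<epsilon> \<delta>1)"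
      by blast
    show "\<exists>\<delta>>0. \<forall>x\<in>X. \<forall>y\<in>X. d x y < \<delta> \<longrightarrow> (\<forall>i\<le>Suc N. d ((f ^^ i) x) ((f ^^ i) y) < \<epsilon>)"
    proof (intro exI conjI ballI impI allI)
      fix x y i assume xy: "x \<in> X" "y \<in> X" "d x y < \<delta>" and i: "i \<le> Suc N"
      show "d ((f ^^ i) x) ((f ^^ i) y) < \<epsilon>"
      proof (cases "i \<le> N")
        case True then show ?thesis using d xy by fastforce
      next
        case False
        then have "i = Suc N" using i by simp
        moreover have "d ((f ^^ N) x) ((f ^^ N) y) < \<delta>1" using d xy by fastforce
        then have "d (f ((f ^^ N) x)) (f ((f ^^ N) y)) < \<epsilon>"
          using d1(2) fi_in xy commute by metis
        ultimately show ?thesis by simp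
      qed
    qed (use d in auto)
  qed
qed

lemma H_uc:
  assumes uc: "uniformly_continuous_map (metric (X, d)) (metric (X, d)) f"
    and tame: "tame_defseq X d U"
  shows "uniformly_continuous_map (metric (X, d)) (metric (IL, inv_limit_dist)) H"
  unfolding uniformly_continuous_map_def Metric_space.mspace_metric[OF ild_metric]
    Metric_space.mdist_metric[OF ild_metric] mspace_metric mdist_metric
proof (intro conjI allI impI)
  show "H \<in> X \<rightarrow> IL" using H_in by auto
next
  fix \<epsilon> :: real assume e: "\<epsilon> > 0"
  obtain N where N: "1 / real (N + 2) < \<epsilon>" using small_N[OF e] by blast
  obtain \<rho> where rho: "\<rho> > 0" "\<forall>A\<in>U N. \<forall>B\<in>U N. A \<noteq> B \<longrightarrow> (\<forall>x\<in>A. \<forall>y\<in>B. \<rho> \<le> d x y)"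
    using tame unfolding tame_defseq_def by blast
  obtain \<delta> where d: "\<delta> > 0" "\<forall>x\<in>X. \<forall>y\<in>X. d x y < \<delta> \<longrightarrow> (\<forall>i\<le>N. d ((f ^^ i) x) ((f ^^ i) y) < \<rho>)"
    using fi_uc[OF uc, of N, rule_format, OF rho(1)] by blast
  show "\<exists>\<delta>>0. \<forall>x\<in>X. \<forall>y\<in>X. d y x < \<delta> \<longrightarrow> inv_limit_dist (H y) (H x) < \<epsilon>"
  proof (intro exI conjI ballI impI)
    fix x y assume xy: "x \<in> X" "y \<in> X" "d y x < \<delta>"
    have "cell (U N) ((f ^^ i) x) = cell (U N) ((f ^^ i) y)" if i: "i \<le> N" for i
    proof (rule ccontr)
      assume ne: "cell (U N) ((f ^^ i) x) \<noteq> cell (U N) ((f ^^ i) y)"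
      have "\<rho> \<le> d ((f ^^ i) y) ((f ^^ i) x)"
        using rho(2) ne cell_in cell_mem fi_in xy by metis
      moreover have "d ((f ^^ i) y) ((f ^^ i) x) < \<rho>" using d xy i by blast
      ultimately show False by simp
    qed
    then have "\<forall>i\<le>N. cell (U N) ((f ^^ i) x) = cell (U N) ((f ^^ i) y)" by blast
    from H_close[OF xy(2) xy(1) this] show "inv_limit_dist (H y) (H x) < \<epsilon>" using N by linarith
  qed (use d in auto)
qed

lemma G_uc:
  assumes tame: "tame_defseq X d U"
  shows "uniformly_continuous_map (metric (IL, inv_limit_dist)) (metric (X, d)) G"
  unfolding uniformly_continuous_map_def Metric_space.mspace_metric[OF ild_metric]
    Metric_space.mdist_metric[OF ild_metric] mspace_metric mdist_metric
proof (intro conjI allI impI)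
  show "G \<in> IL \<rightarrow> X" using G_prop by auto
next
  fix \<epsilon> :: real assume e: "\<epsilon> > 0"
  have "(\<lambda>n. SUP A\<in>U n. set_diam d A) \<longlonglongrightarrow> 0" using tame unfolding tame_defseq_def by blast
  then have "eventually (\<lambda>n. (SUP A\<in>U n. set_diam d A) < ereal \<epsilon>) sequentially"
    by (rule order_tendstoD(2)) (use e in simp)
  then obtain m where m: "(SUP A\<in>U m. set_diam d A) < ereal \<epsilon>" using eventually_sequentially by auto
  show "\<exists>\<delta>>0. \<forall>x\<in>IL. \<forall>y\<in>IL. inv_limit_dist y x < \<delta> \<longrightarrow> d (G y) (G x) < \<epsilon>"
  proof (intro exI conjI ballI impI)
    fix x y assume xy: "x \<in> IL" "y \<in> IL" "inv_limit_dist y x < 1 / real (Suc m)"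
    then have eq: "y m 0 = x m 0" using ild_large by blast
    have in1: "G y \<in> y m 0" "G x \<in> y m 0" using G_prop xy eq by auto
    have "ereal (d (G y) (G x)) \<le> set_diam d (y m 0)"
      unfolding set_diam_def using in1 by (intro SUP_upper2[of "(G y, G x)"]) auto
    also have "\<dots> \<le> (SUP A\<in>U m. set_diam d A)" using IL_in[OF xy(2)] by (rule SUP_upper)
    also have "\<dots> < ereal \<epsilon>" by (rule m)
    finally show "d (G y) (G x) < \<epsilon>" by simp
  qed simp
qed

end

theorem theorem4p13:
  fixes X :: "'a set" and d :: "'a \<Rightarrow> 'a \<Rightarrow> real" and f :: "'a \<Rightarrow> 'a"
    and U :: "nat \<Rightarrow> 'a set set"
  assumes "Metric_space X d"
    and "X \<noteq> {}"
    and "separable_space (Metric_space.mtopology X d)"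
    and "continuous_map (Metric_space.mtopology X d) (Metric_space.mtopology X d) f"
    and "complete_defseq X d U"
  shows "Metric_space (inv_limit X f U) inv_limit_dist
    \<and> (\<exists>h. homeomorphic_map (mtopology_of (metric (X, d)))
                (mtopology_of (metric (inv_limit X f U, inv_limit_dist))) h
           \<and> (\<forall>x\<in>X. h (f x) = sigma_star (h x)))
    \<and> (tame_defseq X d U \<and> uniformly_continuous_map (metric (X, d)) (metric (X, d)) f \<longrightarrow>
         (\<exists>h g. homeomorphic_maps (mtopology_of (metric (X, d)))
                   (mtopology_of (metric (inv_limit X f U, inv_limit_dist))) h g
                \<and> (\<forall>x\<in>X. h (f x) = sigma_star (h x))
                \<and> uniformly_continuous_map (metric (X, d))
                     (metric (inv_limit X f U, inv_limit_dist)) h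
                \<and> uniformly_continuous_map (metric (inv_limit X f U, inv_limit_dist))
                     (metric (X, d)) g))"
proof -
  interpret C: cds X d f U
    using assms(1,4,5) by (simp add: cds_def cds_axioms_def)
  have top: "mtopology_of (metric (inv_limit X f U, inv_limit_dist)) = Metric_space.mtopology (inv_limit X f U) inv_limit_dist"
    using Metric_space.mtopology_of[OF ild_metric] .
  have hm: "homeomorphic_maps (mtopology_of (metric (X, d)))
                   (mtopology_of (metric (inv_limit X f U, inv_limit_dist))) C.H C.G"
    using C.homeo by (simp add: top)
  have sh: "\<forall>x\<in>X. C.H (f x) = sigma_star (C.H x)" using C.H_shift by simp
  show ?thesis
  proof (intro conjI impI)
    show "Metric_space (inv_limit X f U) inv_limit_dist" by (rule ild_metric)
    show "\<exists>h. homeomorphic_map (mtopology_of (metric (X, d)))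
                (mtopology_of (metric (inv_limit X f U, inv_limit_dist))) h
           \<and> (\<forall>x\<in>X. h (f x) = sigma_star (h x))"
      using hm sh homeomorphic_map_maps by blast
  next
    assume "tame_defseq X d U \<and> uniformly_continuous_map (metric (X, d)) (metric (X, d)) f"
    then show "\<exists>h g. homeomorphic_maps (mtopology_of (metric (X, d)))
                   (mtopology_of (metric (inv_limit X f U, inv_limit_dist))) h g
                \<and> (\<forall>x\<in>X. h (f x) = sigma_star (h x))
                \<and> uniformly_continuous_map (metric (X, d))
                     (metric (inv_limit X f U, inv_limit_dist)) h
                \<and> uniformly_continuous_map (metric (inv_limit X f U, inv_limit_dist))
                     (metric (X, d)) g"
      using hm sh C.H_uc C.G_uc by blast
  qed
qed

end
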